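(* Let $L(\mathbf x,\dot{\mathbf x},t)=-mc^2\sqrt{1-\dot{\mathbf x}^2/c^2}-q\big[A^0(t,\mathbf x)-\mathbf A(t,\mathbf x)\cdot\dot{\mathbf x}/c\big]$ and let $\mathbf Q(\mathbf x,\dot{\mathbf x},t)$ be an additional force. Define $$\hat{\mathcal L}(\hat{\mathbf x},\hat{\mathbf x}',\xi):=(1+\hat z')\,L\Big(\hat{\mathbf x},\frac{c\hat{\mathbf x}'}{1+\hat z'},\frac{\xi+\hat z}{c}\Big),$$ $$\hat{\mathbf Q}^{\perp}(\hat{\mathbf x},\hat{\mathbf x}',\xi):=(1+\hat z')\,\mathbf Q^{\perp}\Big(\hat{\mathbf x},\frac{c\hat{\mathbf x}'}{1+\hat z'},\frac{\xi+\hat z}{c}\Big),\qquad \hat Q^z(\hat{\mathbf x},\hat{\mathbf x}',\xi):=\Big[Q^z-\hat{\mathbf x}^{\perp}{}'\cdot\mathbf Q^{\perp}\Big]\Big(\hat{\mathbf x},\frac{c\hat{\mathbf x}'}{1+\hat z'},\frac{\xi+\hat z}{c}\Big).$$ Then a motion $\mathbf x(t)$ with $|\dot{\mathbf x}|<c$ satisfies the Lagrange equations $$\frac{d}{dt}\frac{\partial L}{\partial\dot{\mathbf x}}-\frac{\partial L}{\partial\mathbf x}=\mathbf Q$$ if and only if its reparametrization $\hat{\mathbf x}(\xi)$ by $\xi=ct-z$ satisfies $$\frac{d}{d\xi}\frac{\partial\hat{\mathcal L}}{\partial\hat{\mathbf x}'}-\frac{\partial\hat{\mathcal L}}{\partial\hat{\mathbf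 x}}=\hat{\mathbf Q}.$$
   Context: A particle of rest mass $m>0$ and charge $q$ in an external electromagnetic potential $(A^0,\mathbf A)(t,\mathbf x)$. Coordinates $\mathbf x=(x,y,z)$, $\perp$ denotes $(x,y)$-components, dot is $d/dt$. Since $|\dot{\mathbf x}|<c$, $\xi(t)=ct-z(t)$ is strictly increasing; $\hat{\mathbf x}(\xi)$ is defined by $\hat{\mathbf x}(\xi(t))=\mathbf x(t)$, and prime denotes $d/d\xi$ (so that $1+\hat z'>0$ and $d/d\xi=(1+\hat z')\,d/d(ct)$). *)

theory Defs
  imports "HOL-Analysis.Analysis"
begin

text \<open>Vectors in R^3 are real^3; components: v$1 = x, v$2 = y, v$3 = z.
  A Lagrangian / generalized force is a function of (position, velocity, time).\<close>

type_synonym vec3 = "real ^ 3"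

definition grad_pos :: "(vec3 \<Rightarrow> vec3 \<Rightarrow> real \<Rightarrow> real) \<Rightarrow> vec3 \<Rightarrow> vec3 \<Rightarrow> real \<Rightarrow> vec3" where
  "grad_pos L x v t = (\<chi> i. deriv (\<lambda>s. L (x + s *\<^sub>R axis i 1) v t) 0)"

definition grad_vel :: "(vec3 \<Rightarrow> vec3 \<Rightarrow> real \<Rightarrow> real) \<Rightarrow> vec3 \<Rightarrow> vec3 \<Rightarrow> real \<Rightarrow> vec3" where
  "grad_vel L x v t = (\<chi> i. deriv (\<lambda>s. L x (v + s *\<^sub>R axis i 1) t) 0)"

definition lagrange_eqs ::
  "(vec3 \<Rightarrow> vec3 \<Rightarrow> real \<Rightarrow> real) \<Rightarrow> (vec3 \<Rightarrow> vec3 \<Rightarrow> real \<Rightarrow> vec3) \<Rightarrow> (real \<Rightarrow> vec3) \<Rightarrow> real set \<Rightarrow> bool" where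
  "lagrange_eqs L Q X S \<longleftrightarrow>
     (\<forall>s\<in>S. ((\<lambda>r. grad_vel L (X r) (vector_derivative X (at r)) r) has_vector_derivative
              (Q (X s) (vector_derivative X (at s)) s + grad_pos L (X s) (vector_derivative X (at s)) s)) (at s))"

definition Lag :: "real \<Rightarrow> real \<Rightarrow> real \<Rightarrow> (real \<times> vec3 \<Rightarrow> real) \<Rightarrow> (real \<times> vec3 \<Rightarrow> vec3)
                    \<Rightarrow> vec3 \<Rightarrow> vec3 \<Rightarrow> real \<Rightarrow> real" where
  "Lag m q c A0 A x v t = - m * c\<^sup>2 * sqrt (1 - (v \<bullet> v) / c\<^sup>2) - q * (A0 (t, x) - A (t, x) \<bullet> v / c)"

definition Lhat :: "real \<Rightarrow> (vec3 \<Rightarrow> vec3 \<Rightarrow> real \<Rightarrow> real) \<Rightarrow> vec3 \<Rightarrow> vec3 \<Rightarrow> real \<Rightarrow> real" where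
  "Lhat c L xh xh' \<xi> = (1 + xh' $ 3) * L xh ((c / (1 + xh' $ 3)) *\<^sub>R xh') ((\<xi> + xh $ 3) / c)"

definition Qhat :: "real \<Rightarrow> (vec3 \<Rightarrow> vec3 \<Rightarrow> real \<Rightarrow> vec3) \<Rightarrow> vec3 \<Rightarrow> vec3 \<Rightarrow> real \<Rightarrow> vec3" where
  "Qhat c Q xh xh' \<xi> =
     (let F = Q xh ((c / (1 + xh' $ 3)) *\<^sub>R xh') ((\<xi> + xh $ 3) / c)
      in (\<chi> i. if i = 3 then F $ 3 - (xh' $ 1 * F $ 1 + xh' $ 2 * F $ 2)
               else (1 + xh' $ 3) * F $ i))"

end

theory Submission
  imports Defs
begin


lemma chain_L:
  fixes L :: "vec3 \<Rightarrow> vec3 \<Rightarrow> real \<Rightarrow> real"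
  assumes D: "((\<lambda>(x,v,t). L x v t) has_derivative DL) (at (fa s, fb s, fc s))"
    and da: "(fa has_vector_derivative da) (at s)" and db: "(fb has_vector_derivative db) (at s)"
    and dc: "(fc has_real_derivative dc) (at s)"
  shows "((\<lambda>r. L (fa r) (fb r) (fc r)) has_real_derivative DL (da, db, dc)) (at s)"
proof -
  have lin: "linear DL" using D has_derivative_linear by blast
  have dc': "(fc has_vector_derivative dc) (at s)"
    using dc by (simp add: has_real_derivative_iff_has_vector_derivative)
  have f: "((\<lambda>r. (fa r, fb r, fc r)) has_derivative (\<lambda>h. h *\<^sub>R (da, db, dc))) (at s)"
    using has_vector_derivative_Pair[OF da has_vector_derivative_Pair[OF db dc']]
    by (simp add: has_vector_derivative_def)
  have "((\<lambda>r. (\<lambda>(x,v,t). L x v t) (fa r, fb r, fc r)) has_derivative (\<lambda>h. DL (h *\<^sub>R (da, db, dc)))) (at s)"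
    using has_derivative_compose[OF f D] by simp
  moreover have "(\<lambda>h. DL (h *\<^sub>R (da, db, dc))) = (*) (DL (da, db, dc))"
  proof
    fix h show "DL (h *\<^sub>R (da, db, dc)) = DL (da, db, dc) * h"
      using linear_scale[OF lin, of h "(da,db,dc)"] by (simp only: real_scaleR_def mult.commute)
  qed
  ultimately show ?thesis by (simp add: has_field_derivative_def)
qed



lemma grad_dir:
  fixes L :: "vec3 \<Rightarrow> vec3 \<Rightarrow> real \<Rightarrow> real"
  assumes D: "((\<lambda>(x,v,t). L x v t) has_derivative DL) (at (x,v,t))"
    and f: "(f has_derivative (\<lambda>h. h *\<^sub>R d)) (at 0)" and f0: "f 0 = (x,v,t)"
  shows "deriv (\<lambda>s. (\<lambda>(x,v,t). L x v t) (f s)) 0 = DL d"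
proof -
  have lin: "linear DL" using D has_derivative_linear by blast
  have "((\<lambda>s. (\<lambda>(x,v,t). L x v t) (f s)) has_derivative (DL \<circ> (\<lambda>h. h *\<^sub>R d))) (at 0)"
  proof -
    have "((\<lambda>(x,v,t). L x v t) has_derivative DL) (at (f 0))" using D f0 by simp
    from has_derivative_compose[OF f this] show ?thesis by (simp add: o_def)
  qed
  moreover have "(DL \<circ> (\<lambda>h. h *\<^sub>R d)) = (\<lambda>h. h * DL d)"
    using lin by (auto simp: o_def linear_scale)
  moreover have "(\<lambda>h. h * DL d) = (*) (DL d)" by (auto simp: fun_eq_iff mult.commute)
  ultimately have "((\<lambda>s. (\<lambda>(x,v,t). L x v t) (f s)) has_field_derivative DL d) (at 0)"
    by (simp add: has_field_derivative_def)
  then show ?thesis by (rule DERIV_imp_deriv)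
qed

lemma grad_from_joint:
  fixes L :: "vec3 \<Rightarrow> vec3 \<Rightarrow> real \<Rightarrow> real"
  assumes D: "((\<lambda>(x,v,t). L x v t) has_derivative DL) (at (x,v,t))"
  shows "grad_vel L x v t = (\<chi> i. DL (0, axis i 1, 0))"
    and "grad_pos L x v t = (\<chi> i. DL (axis i 1, 0, 0))"
proof -
  { fix i :: 3
    have f: "((\<lambda>s. (x, v + s *\<^sub>R axis i 1, t)) has_derivative (\<lambda>h. h *\<^sub>R (0, axis i 1, 0))) (at 0)"
      by (auto intro!: derivative_eq_intros simp: zero_prod_def)
    have "deriv (\<lambda>s. L x (v + s *\<^sub>R axis i 1) t) 0 = DL (0, axis i 1, 0)"
      using grad_dir[OF D f] by simp
  } note a = this
  { fix i :: 3
    have f: "((\<lambda>s. (x + s *\<^sub>R axis i 1, v, t)) has_derivative (\<lambda>h. h *\<^sub>R (axis i 1, 0, 0))) (at 0)"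
      by (auto intro!: derivative_eq_intros simp: zero_prod_def)
    have "deriv (\<lambda>s. L (x + s *\<^sub>R axis i 1) v t) 0 = DL (axis i 1, 0, 0)"
      using grad_dir[OF D f] by simp
  } note b = this
  show "grad_vel L x v t = (\<chi> i. DL (0, axis i 1, 0))" using a by (simp add: grad_vel_def)
  show "grad_pos L x v t = (\<chi> i. DL (axis i 1, 0, 0))" using b by (simp add: grad_pos_def)
qed



lemma Lag_deriv:
  assumes dA0: "A0 differentiable (at (t,x))" and dA: "A differentiable (at (t,x))"
    and c: "c > 0" and v: "norm v < c"
  shows "((\<lambda>(x,v,t). Lag m q c A0 A x v t) has_derivative
     (\<lambda>(hx,hv,ht). (m / sqrt (1 - (v \<bullet> v)/c\<^sup>2)) * (v \<bullet> hv)
        - q * (frechet_derivative A0 (at (t,x)) (ht,hx) - (frechet_derivative A (at (t,x)) (ht,hx) \<bullet> v + A (t,x) \<bullet> hv)/c))) (at (x,v,t))"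
proof -
  define DA0 where "DA0 = frechet_derivative A0 (at (t,x))"
  define DA where "DA = frechet_derivative A (at (t,x))"
  have hA0': "(A0 has_derivative DA0) (at (t,x))" using dA0 frechet_derivative_works DA0_def by blast
  have hA': "(A has_derivative DA) (at (t,x))" using dA frechet_derivative_works DA_def by blast
  have inner: "((\<lambda>p::vec3\<times>vec3\<times>real. (snd (snd p), fst p)) has_derivative (\<lambda>h. (snd (snd h), fst h))) (at (x,v,t))"
    by (auto intro!: derivative_eq_intros)
  have hA0: "((\<lambda>p::vec3\<times>vec3\<times>real. A0 (snd (snd p), fst p)) has_derivative (\<lambda>h. DA0 (snd (snd h), fst h))) (at (x,v,t))"
    using has_derivative_compose[OF inner, of A0 DA0] hA0' by simp
  have hA: "((\<lambda>p::vec3\<times>vec3\<times>real. A (snd (snd p), fst p)) has_derivative (\<lambda>h. DA (snd (snd h), fst h))) (at (x,v,t))"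
    using has_derivative_compose[OF inner, of A DA] hA' by simp
  have vv: "v \<bullet> v < c\<^sup>2"
    using v c by (metis norm_ge_zero power2_norm_eq_inner power_strict_mono zero_less_numeral)
  have pos: "0 < 1 - (v \<bullet> v)/c\<^sup>2" using vv c by (simp add: field_simps)
  have eq: "(\<lambda>(x,v,t). Lag m q c A0 A x v t) = (\<lambda>p. - m * c\<^sup>2 * sqrt (1 - (fst (snd p) \<bullet> fst (snd p)) / c\<^sup>2)
        - q * (A0 (snd (snd p), fst p) - A (snd (snd p), fst p) \<bullet> fst (snd p) / c))"
    by (auto simp: Lag_def fun_eq_iff)
  have "((\<lambda>p. - m * c\<^sup>2 * sqrt (1 - (fst (snd p) \<bullet> fst (snd p)) / c\<^sup>2)
        - q * (A0 (snd (snd p), fst p) - A (snd (snd p), fst p) \<bullet> fst (snd p) / c)) has_derivative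
     (\<lambda>(hx,hv,ht). (m / sqrt (1 - (v \<bullet> v)/c\<^sup>2)) * (v \<bullet> hv)
        - q * (DA0 (ht,hx) - (DA (ht,hx) \<bullet> v + A (t,x) \<bullet> hv)/c))) (at (x,v,t))"
    using pos c
    by (auto intro!: derivative_eq_intros hA0 hA simp: fun_eq_iff field_simps inner_commute power2_eq_square)
  then show ?thesis unfolding eq DA0_def DA_def .
qed



lemma lin_mid:
  assumes lin: "linear DL"
  shows "DL (0, a *\<^sub>R p + b *\<^sub>R q, 0::real) = a * DL (0::vec3, p, 0::real) + b * (DL (0, q, 0) :: real)"
proof -
  have "DL (0, a *\<^sub>R p + b *\<^sub>R q, 0::real) = DL (a *\<^sub>R (0::vec3, p, 0::real) + b *\<^sub>R (0, q, 0))" by simp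
  also have "\<dots> = a * DL (0::vec3, p, 0::real) + b * (DL (0, q, 0) :: real)"
    by (simp only: linear_add[OF lin] linear_scale[OF lin] real_scaleR_def)
  finally show ?thesis .
qed

lemma lin_fst:
  assumes lin: "linear DL"
  shows "DL (p, 0, b) = DL (p, 0::vec3, 0::real) + b * (DL (0::vec3, 0::vec3, 1) :: real)"
proof -
  have "DL (p, 0::vec3, b) = DL ((p, 0, 0) + b *\<^sub>R (0::vec3, 0::vec3, 1::real))" by simp
  also have "\<dots> = DL (p, 0::vec3, 0::real) + b * (DL (0::vec3, 0::vec3, 1) :: real)"
    by (simp only: linear_add[OF lin] linear_scale[OF lin] real_scaleR_def)
  finally show ?thesis .
qed

lemma alg1: "(a::real) > 0 \<Longrightarrow> a * ((c/a) * X + (-(c*d)/a^2) * W) = c * X - d * ((c/a) * W)"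
  by (simp add: field_simps power2_eq_square)

lemma Lhat_grad_vel:
  fixes L :: "vec3 \<Rightarrow> vec3 \<Rightarrow> real \<Rightarrow> real"
  assumes D: "((\<lambda>(x,v,t). L x v t) has_derivative DL) (at (y, v, t))"
   and w3: "1 + w$3 > 0" and v: "v = (c/(1+w$3)) *\<^sub>R w" and t: "t = (s + y$3)/c"
  shows "grad_vel (Lhat c L) y w s = (\<chi> j. c * DL (0, axis j 1, 0) + (if j = 3 then L y v t - DL (0,v,0) else 0))"
proof -
  have lin: "linear DL" using D has_derivative_linear by blast
  { fix j :: 3
    define e :: vec3 where "e = axis j 1"
    define \<delta> where "\<delta> = e $ 3"
    define g where "g = (\<lambda>\<sigma>. 1 + w$3 + \<sigma> * \<delta>)"
    define f2 where "f2 = (\<lambda>\<sigma>. (c / g \<sigma>) *\<^sub>R (w + \<sigma> *\<^sub>R e))"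
    define dv where "dv = (c / g 0) *\<^sub>R e + (- (c * \<delta>) / (g 0)^2) *\<^sub>R w"
    have g0: "g 0 = 1 + w$3" by (simp add: g_def)
    have fq: "(\<lambda>\<sigma>. Lhat c L y (w + \<sigma> *\<^sub>R e) s) = (\<lambda>\<sigma>. g \<sigma> * L y (f2 \<sigma>) t)"
      by (simp add: Lhat_def g_def f2_def \<delta>_def t fun_eq_iff add.assoc)
    have dg: "(g has_real_derivative \<delta>) (at 0)"
      unfolding g_def by (auto intro!: derivative_eq_intros)
    have df2: "(f2 has_vector_derivative dv) (at 0)"
      unfolding f2_def dv_def g_def using w3
      by (auto intro!: derivative_eq_intros simp: power2_eq_square)
    have f20: "f2 0 = v" by (simp add: f2_def v g0)
    have dL: "((\<lambda>\<sigma>. L y (f2 \<sigma>) t) has_real_derivative DL (0, dv, 0)) (at 0)"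
      using chain_L[where L=L and DL=DL and fa="\<lambda>_. y" and fb=f2 and fc="\<lambda>_. t" and s=0 and da=0 and db=dv and dc=0] D f20 df2 by auto
    have dprod: "((\<lambda>\<sigma>. g \<sigma> * L y (f2 \<sigma>) t) has_real_derivative \<delta> * L y v t + g 0 * DL (0, dv, 0)) (at 0)"
      using DERIV_mult[OF dg dL] f20 by (simp add: mult.commute)
    moreover have alg: "g 0 * DL (0, dv, 0) = c * DL (0, e, 0) - \<delta> * DL (0, v, 0)"
    proof -
      have l1: "DL (0, dv, 0) = (c / g 0) * DL (0, e, 0) + (- (c * \<delta>) / (g 0)^2) * DL (0, w, 0)"
        unfolding dv_def by (rule lin_mid[OF lin])
      have l2: "DL (0, v, 0) = (c / (1 + w$3)) * DL (0, w, 0)"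
        using lin_mid[OF lin, of "c / (1 + w$3)" w 0 w] by (simp add: v)
      show ?thesis unfolding l1 l2 g0 by (rule alg1[OF w3])
    qed
    ultimately have "((\<lambda>\<sigma>. Lhat c L y (w + \<sigma> *\<^sub>R e) s) has_real_derivative
        c * DL (0, e, 0) + (if j = 3 then L y v t - DL (0,v,0) else 0)) (at 0)"
    proof -
      have dd: "\<delta> = (if j = 3 then 1 else 0)" by (simp add: \<delta>_def e_def axis_def)
      show ?thesis unfolding fq using dprod alg unfolding dd by (cases "j = 3") (auto simp: algebra_simps)
    qed
    then have "deriv (\<lambda>\<sigma>. Lhat c L y (w + \<sigma> *\<^sub>R axis j 1) s) 0 =
        c * DL (0, axis j 1, 0) + (if j = 3 then L y v t - DL (0,v,0) else 0)"
      unfolding e_def by (rule DERIV_imp_deriv)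
  }
  then show ?thesis by (simp add: grad_vel_def)
qed

lemma Lhat_grad_pos:
  fixes L :: "vec3 \<Rightarrow> vec3 \<Rightarrow> real \<Rightarrow> real"
  assumes D: "((\<lambda>(x,v,t). L x v t) has_derivative DL) (at (y, v, t))"
   and v: "v = (c/(1+w$3)) *\<^sub>R w" and t: "t = (s + y$3)/c" and c: "c \<noteq> 0"
  shows "grad_pos (Lhat c L) y w s = (\<chi> j. (1 + w$3) * (DL (axis j 1, 0, 0) + (if j = 3 then DL (0,0,1) / c else 0)))"
proof -
  have lin: "linear DL" using D has_derivative_linear by blast
  { fix j :: 3
    define e :: vec3 where "e = axis j 1"
    define \<delta> where "\<delta> = e $ 3"
    have fq: "(\<lambda>\<sigma>. Lhat c L (y + \<sigma> *\<^sub>R e) w s) = (\<lambda>\<sigma>. (1 + w$3) * L (y + \<sigma> *\<^sub>R e) v ((s + y$3 + \<sigma> * \<delta>) / c))"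
      by (simp add: Lhat_def \<delta>_def v fun_eq_iff add.assoc)
    have d1: "((\<lambda>\<sigma>. y + \<sigma> *\<^sub>R e) has_vector_derivative e) (at 0)"
      by (auto intro!: derivative_eq_intros)
    have d3: "((\<lambda>\<sigma>. (s + y$3 + \<sigma> * \<delta>) / c) has_real_derivative \<delta> / c) (at 0)"
      using c by (auto intro!: derivative_eq_intros)
    have dL: "((\<lambda>\<sigma>. L (y + \<sigma> *\<^sub>R e) v ((s + y$3 + \<sigma> * \<delta>) / c)) has_real_derivative DL (e, 0, \<delta>/c)) (at 0)"
      using chain_L[where L=L and DL=DL and fa="\<lambda>\<sigma>. y + \<sigma> *\<^sub>R e" and fb="\<lambda>_. v" and fc="\<lambda>\<sigma>. (s + y$3 + \<sigma> * \<delta>) / c" and s=0 and da=e and db=0 and dc="\<delta>/c"] D d1 d3 t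
      by auto
    have "((\<lambda>\<sigma>. Lhat c L (y + \<sigma> *\<^sub>R e) w s) has_real_derivative (1 + w$3) * DL (e, 0, \<delta>/c)) (at 0)"
      unfolding fq by (rule DERIV_cmult[OF dL])
    moreover have "DL (e, 0, \<delta>/c) = DL (e, 0, 0) + (if j = 3 then DL (0,0,1) / c else 0)"
      using lin_fst[OF lin, of e "\<delta>/c"] by (simp add: \<delta>_def e_def axis_def)
    ultimately have "deriv (\<lambda>\<sigma>. Lhat c L (y + \<sigma> *\<^sub>R axis j 1) w s) 0 =
        (1 + w$3) * (DL (axis j 1, 0, 0) + (if j = 3 then DL (0,0,1) / c else 0))"
      unfolding e_def by (intro DERIV_imp_deriv) simp
  }
  then show ?thesis by (simp add: grad_pos_def)
qed



lemma vec3_expand: "(h::vec3) = h$1 *\<^sub>R axis 1 1 + h$2 *\<^sub>R axis 2 1 + h$3 *\<^sub>R axis 3 1"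
  by (simp add: vec_eq_iff forall_3 axis_def)

lemma inner3: "(a::vec3) \<bullet> b = a$1 * b$1 + a$2 * b$2 + a$3 * b$3"
  by (simp add: inner_vec_def sum_3)

lemma decomp:
  fixes DL :: "vec3 \<times> vec3 \<times> real \<Rightarrow> real"
  assumes lin: "linear DL"
  shows "DL (hx, hv, ht) = hx \<bullet> (\<chi> i. DL (axis i 1, 0, 0)) + hv \<bullet> (\<chi> i. DL (0, axis i 1, 0)) + ht * DL (0, 0, 1)"
proof -
  have "(hx, hv, ht) = hx$1 *\<^sub>R (axis 1 1, 0, 0) + hx$2 *\<^sub>R (axis 2 1, 0, 0) + hx$3 *\<^sub>R (axis 3 1, 0, 0)
     + (hv$1 *\<^sub>R (0, axis 1 1, 0) + hv$2 *\<^sub>R (0, axis 2 1, 0) + hv$3 *\<^sub>R (0, axis 3 1, 0)) + ht *\<^sub>R (0::vec3, 0::vec3, 1::real)"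
    by (simp add: vec3_expand[of hx, symmetric] vec3_expand[of hv, symmetric])
  then have "DL (hx, hv, ht) = DL (hx$1 *\<^sub>R (axis 1 1, 0, 0) + hx$2 *\<^sub>R (axis 2 1, 0, 0) + hx$3 *\<^sub>R (axis 3 1, 0, 0)
     + (hv$1 *\<^sub>R (0, axis 1 1, 0) + hv$2 *\<^sub>R (0, axis 2 1, 0) + hv$3 *\<^sub>R (0, axis 3 1, 0)) + ht *\<^sub>R (0::vec3, 0::vec3, 1::real))"
    by simp
  also have "\<dots> = hx$1 * DL (axis 1 1, 0, 0) + hx$2 * DL (axis 2 1, 0, 0) + hx$3 * DL (axis 3 1, 0, 0)
     + (hv$1 * DL (0, axis 1 1, 0) + hv$2 * DL (0, axis 2 1, 0) + hv$3 * DL (0, axis 3 1, 0)) + ht * DL (0, 0, 1)"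
    by (simp only: linear_add[OF lin] linear_scale[OF lin] real_scaleR_def)
  finally show ?thesis by (simp add: inner3)
qed

lemma grad_vel_Lag:
  assumes dA0: "A0 differentiable (at (t,x))" and dA: "A differentiable (at (t,x))"
    and c: "c > 0" and v: "norm v < c"
  shows "grad_vel (Lag m q c A0 A) x v t = (m / sqrt (1 - (v \<bullet> v)/c\<^sup>2)) *\<^sub>R v + (q / c) *\<^sub>R A (t, x)"
proof -
  have l0: "linear (frechet_derivative A0 (at (t,x)))" "linear (frechet_derivative A (at (t,x)))"
    using dA0 dA frechet_derivative_works has_derivative_linear by blast+
  have z0: "frechet_derivative A0 (at (t,x)) (0,0) = 0" "frechet_derivative A (at (t,x)) (0,0) = 0"
    using linear_0[OF l0(1)] linear_0[OF l0(2)] by (simp_all add: zero_prod_def)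
  show ?thesis
    using grad_from_joint(1)[OF Lag_deriv[OF dA0 dA c v]] z0 c
    by (simp add: vec_eq_iff inner_axis)
qed

lemma a3_alg:
  fixes k c v3 P3 v1 P1 v2 P2 G1 G2 G3 GT Q3 Q1 Q2 :: real
  assumes k: "k \<noteq> 0" and c: "c \<noteq> 0" and cc: "c = k + v3"
  shows "((c*P3 - (v1*P1 + v2*P2 + v3*P3 - (v1*G1+v2*G2+v3*G3) - GT))/k = Q3 - (v1/k*Q1 + v2/k*Q2) + c/k*(G3 + GT/c))
    \<longleftrightarrow> k*(P3-Q3-G3) - v1*(P1-Q1-G1) - v2*(P2-Q2-G2) = 0"
proof -
  have e1: "Q3 - (v1/k*Q1 + v2/k*Q2) + c/k*(G3 + GT/c) = (k*Q3 - v1*Q1 - v2*Q2 + c*G3 + GT)/k"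
    using k c by (simp add: field_simps)
  have e2: "(c*P3 - (v1*P1 + v2*P2 + v3*P3 - (v1*G1+v2*G2+v3*G3) - GT)) - (k*Q3 - v1*Q1 - v2*Q2 + c*G3 + GT)
      = k*(P3-Q3-G3) - v1*(P1-Q1-G1) - v2*(P2-Q2-G2)"
    by (simp add: cc algebra_simps)
  show ?thesis unfolding e1 using k e2 by (simp add: divide_cancel_right) linarith
qed

lemma final_alg:
  fixes Pd Q0 GX v :: vec3 and GT c :: real
  assumes "v$3 < c" and c: "c > 0"
  defines "W \<equiv> (1 / (c - v$3)) *\<^sub>R v"
  shows "Pd = Q0 + GX \<longleftrightarrow>
    (1 / (c - v$3)) *\<^sub>R (c *\<^sub>R Pd - (v \<bullet> Pd - v \<bullet> GX - GT) *\<^sub>R axis 3 1) =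
    (\<chi> i. if i = 3 then Q0$3 - (W$1 * Q0$1 + W$2 * Q0$2) else (1 + W$3) * Q0$i)
     + (\<chi> j. (1 + W$3) * (GX$j + (if j = 3 then GT / c else 0)))"
    (is "_ \<longleftrightarrow> ?L = ?R")
proof -
  define k where "k = c - v$3"
  have k: "k > 0" using assms by (simp add: k_def)
  have cc: "c = k + v$3" by (simp add: k_def)
  have 1: "1 + W$3 = c / k" using k by (simp add: W_def k_def field_simps)
  define R where "R = Pd - Q0 - GX"
  have Pd: "Pd = R + Q0 + GX" by (simp add: R_def)
  have e: "?L = ?R \<longleftrightarrow> ?L$1 = ?R$1 \<and> ?L$2 = ?R$2 \<and> ?L$3 = ?R$3"
    unfolding vec_eq_iff forall_3 ..
  have L1: "?L$1 = c/k * Pd$1" "?L$2 = c/k * Pd$2" by (simp_all add: axis_def k_def)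
  have R1: "?R$1 = c/k * (Q0$1 + GX$1)" "?R$2 = c/k * (Q0$2 + GX$2)"
    by (simp_all add: 1 algebra_simps)
  have L3: "?L$3 = (c * Pd$3 - (v \<bullet> Pd - v \<bullet> GX - GT)) / k" by (simp add: axis_def k_def)
  have R3: "?R$3 = Q0$3 - (v$1/k * Q0$1 + v$2/k * Q0$2) + c/k * (GX$3 + GT/c)"
    unfolding 1 by (simp add: W_def k_def)
  have ck: "c/k \<noteq> 0" using k c by simp
  have a1: "c/k * Pd$1 = c/k * (Q0$1 + GX$1) \<longleftrightarrow> R$1 = 0" by (simp only: mult_left_cancel[OF ck]) (auto simp: R_def)
  have a2: "c/k * Pd$2 = c/k * (Q0$2 + GX$2) \<longleftrightarrow> R$2 = 0" by (simp only: mult_left_cancel[OF ck]) (auto simp: R_def)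
  have a3: "(c * Pd$3 - (v \<bullet> Pd - v \<bullet> GX - GT)) / k = Q0$3 - (v$1/k * Q0$1 + v$2/k * Q0$2) + c/k * (GX$3 + GT/c)
      \<longleftrightarrow> k * R$3 - v$1 * R$1 - v$2 * R$2 = 0"
    using a3_alg[of k c "v$3" "Pd$3" "v$1" "Pd$1" "v$2" "Pd$2" "GX$1" "GX$2" "GX$3" GT "Q0$3" "Q0$1" "Q0$2"] k c cc
    by (simp add: inner3 R_def)
  have "Pd = Q0 + GX \<longleftrightarrow> R$1 = 0 \<and> R$2 = 0 \<and> R$3 = 0"
    by (simp add: R_def vec_eq_iff forall_3) linarith
  also have "\<dots> \<longleftrightarrow> R$1 = 0 \<and> R$2 = 0 \<and> k * R$3 - v$1 * R$1 - v$2 * R$2 = 0"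
    using k by auto
  also have "\<dots> \<longleftrightarrow> ?L = ?R"
    unfolding e L1 R1 L3 R3 a1 a2 a3 ..
  finally show ?thesis .
qed



theorem proposition10:
  fixes m q c :: real
    and A0 :: "real \<times> vec3 \<Rightarrow> real" and A :: "real \<times> vec3 \<Rightarrow> vec3"
    and Q :: "vec3 \<Rightarrow> vec3 \<Rightarrow> real \<Rightarrow> vec3"
    and T :: "real set" and x xh :: "real \<Rightarrow> vec3"
  assumes "m > 0" and "c > 0"
    and "\<forall>p. A0 differentiable (at p)" and "\<forall>p. A differentiable (at p)"
    and "open T"
    and "\<forall>t\<in>T. x differentiable (at t)"
    and "\<forall>t\<in>T. (\<lambda>s. vector_derivative x (at s)) differentiable (at t)"
    and "\<forall>t\<in>T. norm (vector_derivative x (at t)) < c"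
    and "\<forall>t\<in>T. xh (c * t - x t $ 3) = x t"
  shows "lagrange_eqs (Lag m q c A0 A) Q x T \<longleftrightarrow>
         lagrange_eqs (Lhat c (Lag m q c A0 A)) (Qhat c Q) xh ((\<lambda>t. c * t - x t $ 3) ` T)"
proof -
  have c: "c > 0" using assms(2) .
  have dA0: "\<And>p. A0 differentiable (at p)" and dA: "\<And>p. A differentiable (at p)" using assms(3,4) by auto
  have oT: "open T" using assms(5) .
  define L where "L = Lag m q c A0 A"
  define v where "v = (\<lambda>s. vector_derivative x (at s))"
  define a where "a = (\<lambda>s. vector_derivative v (at s))"
  define DL where "DL = (\<lambda>(y::vec3) (w::vec3) (r::real). (\<lambda>(hx::vec3,hv::vec3,ht::real). (m / sqrt (1 - (w \<bullet> w)/c\<^sup>2)) * (w \<bullet> hv)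
        - q * (frechet_derivative A0 (at (r,y)) (ht,hx) - (frechet_derivative A (at (r,y)) (ht,hx) \<bullet> w + A (r,y) \<bullet> hv)/c)))"
  have LD: "((\<lambda>(x,v,t). L x v t) has_derivative DL y w r) (at (y,w,r))" if "norm w < c" for y w r
    unfolding L_def DL_def using Lag_deriv[OF dA0 dA c that] by simp
  have linDL: "linear (DL y w r)" if "norm w < c" for y w r
    using LD[OF that] has_derivative_linear by blast
  define GX where "GX = (\<lambda>y w r. \<chi> i. DL y w r (axis i 1, 0, 0))"
  define GV where "GV = (\<lambda>y w r. \<chi> i. DL y w r (0, axis i 1, 0))"
  have gp: "grad_pos L y w r = GX y w r" if "norm w < c" for y w r
    using grad_from_joint(2)[OF LD[OF that]] by (simp add: GX_def)
  have gv: "grad_vel L y w r = GV y w r" if "norm w < c" for y w r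
    using grad_from_joint(1)[OF LD[OF that]] by (simp add: GV_def)
  have gvL: "grad_vel L y w r = (m / sqrt (1 - (w \<bullet> w)/c\<^sup>2)) *\<^sub>R w + (q / c) *\<^sub>R A (r, y)"
    if "norm w < c" for y w r
    unfolding L_def by (rule grad_vel_Lag[OF dA0 dA c that])
  have dec: "DL y w r (hx, hv, ht) = hx \<bullet> GX y w r + hv \<bullet> GV y w r + ht * DL y w r (0, 0, 1)"
    if "norm w < c" for y w r hx hv ht
    unfolding GX_def GV_def by (rule decomp[OF linDL[OF that]])

  have xd: "(x has_vector_derivative v t) (at t)" if "t \<in> T" for t
    using assms(6) that vector_derivative_works v_def by blast
  have vd: "(v has_vector_derivative a t) (at t)" if "t \<in> T" for t
    using assms(7) that vector_derivative_works a_def v_def by blast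
  have vc: "norm (v t) < c" if "t \<in> T" for t using assms(8) that v_def by blast
  have v3: "v t $ 3 < c" if "t \<in> T" for t
    using component_le_norm_cart[of "v t" 3] vc[OF that] by linarith
  define \<xi> where "\<xi> = (\<lambda>t. c * t - x t $ 3)"
  have \<xi>d: "(\<xi> has_real_derivative (c - v t $ 3)) (at t)" if "t \<in> T" for t
  proof -
    have "((\<lambda>r. x r $ 3) has_derivative (\<lambda>h. (h *\<^sub>R v t) $ 3)) (at t)"
      using bounded_linear.has_derivative[OF bounded_linear_vec_nth, of x "\<lambda>h. h *\<^sub>R v t" "at t" 3]
        xd[OF that] by (simp add: has_vector_derivative_def)
    moreover have "(\<lambda>h. h * v t $ 3) = (*) (v t $ 3)" by (auto simp: fun_eq_iff)
    ultimately have "((\<lambda>r. x r $ 3) has_real_derivative v t $ 3) (at t)"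
      by (simp add: has_field_derivative_def)
    then show ?thesis unfolding \<xi>_def by (auto intro!: derivative_eq_intros)
  qed
  define \<tau> where "\<tau> = (\<lambda>r. (r + xh r $ 3) / c)"
  have \<tau>\<xi>: "\<tau> (\<xi> t) = t" if "t \<in> T" for t
    using assms(9) that c by (simp add: \<tau>_def \<xi>_def)
  have inj: "inj_on \<xi> T" by (metis inj_onI \<tau>\<xi>)
  have cont\<xi>: "continuous_on T \<xi>"
    using \<xi>d by (meson DERIV_isCont continuous_at_imp_continuous_on)
  define U where "U = \<xi> ` T"
  have oU: "open U" unfolding U_def by (rule invariance_of_domain_gen[OF oT cont\<xi> inj]) simp
  have \<tau>d: "(\<tau> has_real_derivative (1 / (c - v t $ 3))) (at (\<xi> t))" if "t \<in> T" for t
  proof -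
    have k: "c - v t $ 3 \<noteq> 0" using v3[OF that] by simp
    have "(\<tau> has_derivative (*) (1 / (c - v t $ 3))) (at (\<xi> t))"
      apply (rule has_derivative_inverse_strong[OF oT that cont\<xi> \<tau>\<xi>, of "(*) (c - v t $ 3)"])
      using \<xi>d[OF that] k by (auto simp: has_field_derivative_def mult.commute fun_eq_iff)
    then show ?thesis by (simp add: has_field_derivative_def)
  qed
  define W where "W = (\<lambda>t. (1 / (c - v t $ 3)) *\<^sub>R v t)"
  have xhd: "(xh has_vector_derivative W t) (at (\<xi> t))" if "t \<in> T" for t
  proof -
    have "((x \<circ> \<tau>) has_vector_derivative W t) (at (\<xi> t))"
      using vector_diff_chain_at[of \<tau> "1 / (c - v t $ 3)" "\<xi> t" x "v t"] \<tau>d[OF that] xd[OF that] \<tau>\<xi>[OF that]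
      by (simp add: W_def has_real_derivative_iff_has_vector_derivative)
    then show ?thesis
      apply (rule has_vector_derivative_transform_within_open[OF _ oU])
      using that \<tau>\<xi> assms(9) by (auto simp: U_def \<xi>_def)
  qed
  have xhv: "vector_derivative xh (at (\<xi> t)) = W t" if "t \<in> T" for t
    using xhd[OF that] vector_derivative_at by blast
  have W3: "1 + W t $ 3 > 0" and Wv: "(c / (1 + W t $ 3)) *\<^sub>R W t = v t" and \<xi>t: "(\<xi> t + x t $ 3) / c = t"
    if "t \<in> T" for t
  proof -
    have k: "c - v t $ 3 > 0" using v3[OF that] by simp
    have e: "1 + W t $ 3 = c / (c - v t $ 3)" using k by (simp add: W_def field_simps)
    show "1 + W t $ 3 > 0" using e k c by simp
    show "(c / (1 + W t $ 3)) *\<^sub>R W t = v t" using e k c by (simp add: W_def)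
    show "(\<xi> t + x t $ 3) / c = t" using c by (simp add: \<xi>_def)
  qed
  define P where "P = (\<lambda>r. grad_vel L (x r) (v r) r)"
  define Pe where "Pe = (\<lambda>r. (m / sqrt (1 - (v r \<bullet> v r)/c\<^sup>2)) *\<^sub>R v r + (q / c) *\<^sub>R A (r, x r))"
  have PPe: "P r = Pe r" if "r \<in> T" for r
    unfolding P_def Pe_def using gvL[OF vc[OF that]] by simp
  have Pediff: "Pe differentiable (at t)" if "t \<in> T" for t
  proof -
    have vD: "(v has_derivative (\<lambda>h. h *\<^sub>R a t)) (at t)"
      using vd[OF that] by (simp add: has_vector_derivative_def)
    have xD: "((\<lambda>r. (r, x r)) has_derivative (\<lambda>h. (h, h *\<^sub>R v t))) (at t)"
      using xd[OF that] by (auto intro!: derivative_eq_intros simp: has_vector_derivative_def)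
    have AD: "(A has_derivative frechet_derivative A (at (t, x t))) (at (t, x t))"
      using dA frechet_derivative_works by blast
    have hAx: "((\<lambda>r. A (r, x r)) has_derivative (\<lambda>h. frechet_derivative A (at (t, x t)) (h, h *\<^sub>R v t))) (at t)"
      using has_derivative_compose[OF xD AD] by simp
    have vv: "v t \<bullet> v t < c\<^sup>2"
      using vc[OF that] c by (metis norm_ge_zero power2_norm_eq_inner power_strict_mono zero_less_numeral)
    have pos: "0 < 1 - (v t \<bullet> v t)/c\<^sup>2" using vv c by (simp add: field_simps)
    have vdf: "v differentiable (at t)" using vD differentiableI by blast
    have Adf: "(\<lambda>r. A (r, x r)) differentiable (at t)" using hAx differentiableI by blast
    have g: "(\<lambda>r. 1 - v r \<bullet> v r / c\<^sup>2) differentiable (at t)"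
      using vdf c by (auto intro!: derivative_intros)
    have sq: "(\<lambda>r. sqrt (1 - v r \<bullet> v r / c\<^sup>2)) differentiable (at t)"
    proof -
      obtain G where G: "((\<lambda>r. 1 - v r \<bullet> v r / c\<^sup>2) has_derivative G) (at t)"
        using g unfolding differentiable_def by blast
      show ?thesis using DERIV_compose_FDERIV[OF DERIV_real_sqrt[OF pos] G] differentiableI by blast
    qed
    show ?thesis unfolding Pe_def
      using pos c sq vdf Adf c by (auto intro!: derivative_intros)
  qed
  define Pd where "Pd = (\<lambda>t. vector_derivative P (at t))"
  have Pdd: "(P has_vector_derivative Pd t) (at t)" if "t \<in> T" for t
  proof -
    have "(Pe has_vector_derivative vector_derivative Pe (at t)) (at t)"
      using Pediff[OF that] vector_derivative_works by blast
    then have "(P has_vector_derivative vector_derivative Pe (at t)) (at t)"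
      by (rule has_vector_derivative_transform_within_open[OF _ oT that]) (simp add: PPe)
    then show ?thesis unfolding Pd_def using vector_derivative_at by metis
  qed
  have Ld: "((\<lambda>r. L (x r) (v r) r) has_real_derivative DL (x t) (v t) t (v t, a t, 1)) (at t)" if "t \<in> T" for t
    using chain_L[where fa=x and fb=v and fc="\<lambda>r. r" and s=t and DL="DL (x t) (v t) t" and da="v t" and db="a t" and dc=1]
      LD[OF vc[OF that]] xd[OF that] vd[OF that] by simp
  define Hm where "Hm = (\<lambda>r. v r \<bullet> P r - L (x r) (v r) r)"
  define Hmd where "Hmd = (\<lambda>t. a t \<bullet> P t + v t \<bullet> Pd t - DL (x t) (v t) t (v t, a t, 1))"
  have Hmdd: "(Hm has_real_derivative Hmd t) (at t)" if "t \<in> T" for t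
  proof -
    have vD: "(v has_derivative (\<lambda>h. h *\<^sub>R a t)) (at t)"
      using vd[OF that] by (simp add: has_vector_derivative_def)
    have PD: "(P has_derivative (\<lambda>h. h *\<^sub>R Pd t)) (at t)"
      using Pdd[OF that] by (simp add: has_vector_derivative_def)
    have "((\<lambda>r. v r \<bullet> P r) has_derivative (\<lambda>h. v t \<bullet> (h *\<^sub>R Pd t) + (h *\<^sub>R a t) \<bullet> P t)) (at t)"
      using has_derivative_inner[OF vD PD] by simp
    moreover have "(\<lambda>h. v t \<bullet> (h *\<^sub>R Pd t) + (h *\<^sub>R a t) \<bullet> P t) = (*) (a t \<bullet> P t + v t \<bullet> Pd t)"
      by (auto simp: fun_eq_iff algebra_simps)
    ultimately have "((\<lambda>r. v r \<bullet> P r) has_real_derivative (a t \<bullet> P t + v t \<bullet> Pd t)) (at t)"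
      by (simp add: has_field_derivative_def)
    from DERIV_diff[OF this Ld[OF that]] show ?thesis unfolding Hm_def Hmd_def .
  qed
  define Hf where "Hf = (\<lambda>r. c *\<^sub>R P r - Hm r *\<^sub>R axis 3 1)"
  have Hfd: "(Hf has_vector_derivative (c *\<^sub>R Pd t - Hmd t *\<^sub>R axis 3 1)) (at t)" if "t \<in> T" for t
    unfolding Hf_def using Pdd[OF that] Hmdd[OF that] by (auto intro!: derivative_eq_intros)
  have HHf: "grad_vel (Lhat c L) (x r) (W r) (\<xi> r) = Hf r" if "r \<in> T" for r
  proof -
    have D: "((\<lambda>(x,v,t). L x v t) has_derivative DL (x r) (v r) r) (at (x r, v r, r))"
      using LD[OF vc[OF that]] .
    have 1: "grad_vel (Lhat c L) (x r) (W r) (\<xi> r) = (\<chi> j. c * DL (x r) (v r) r (0, axis j 1, 0)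
        + (if j = 3 then L (x r) (v r) r - DL (x r) (v r) r (0, v r, 0) else 0))"
      using Lhat_grad_vel[OF D W3[OF that] Wv[OF that, symmetric] \<xi>t[OF that, symmetric]] .
    have 2: "P r = GV (x r) (v r) r" unfolding P_def using gv[OF vc[OF that]] .
    have 3: "DL (x r) (v r) r (0, v r, 0) = v r \<bullet> GV (x r) (v r) r"
      using dec[OF vc[OF that], where hx=0 and hv="v r" and ht=0] by simp
    show ?thesis unfolding 1 Hf_def Hm_def 2 3
      by (auto simp: vec_eq_iff GV_def axis_def algebra_simps)
  qed
  define Hh where "Hh = (\<lambda>r. grad_vel (Lhat c L) (xh r) (vector_derivative xh (at r)) r)"
  have xh\<xi>: "xh (\<xi> t) = x t" if "t \<in> T" for t using assms(9) that by (simp add: \<xi>_def)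
  have HhU: "Hh (\<xi> t) = Hf t" if "t \<in> T" for t
    unfolding Hh_def xh\<xi>[OF that] xhv[OF that] using HHf[OF that] .
  have Hhd: "(Hh has_vector_derivative ((1 / (c - v t $ 3)) *\<^sub>R (c *\<^sub>R Pd t - Hmd t *\<^sub>R axis 3 1))) (at (\<xi> t))"
    if "t \<in> T" for t
  proof -
    have "((Hf \<circ> \<tau>) has_vector_derivative ((1 / (c - v t $ 3)) *\<^sub>R (c *\<^sub>R Pd t - Hmd t *\<^sub>R axis 3 1))) (at (\<xi> t))"
      using vector_diff_chain_at[of \<tau> "1 / (c - v t $ 3)" "\<xi> t" Hf] \<tau>d[OF that] Hfd[OF that] \<tau>\<xi>[OF that]
      by (simp add: has_real_derivative_iff_has_vector_derivative)
    then show ?thesis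
      apply (rule has_vector_derivative_transform_within_open[OF _ oU])
      using that \<tau>\<xi> HhU by (auto simp: U_def)
  qed
  have lhs: "lagrange_eqs L Q x T \<longleftrightarrow> (\<forall>t\<in>T. Pd t = Q (x t) (v t) t + GX (x t) (v t) t)"
  proof -
    have "lagrange_eqs L Q x T \<longleftrightarrow> (\<forall>t\<in>T. (P has_vector_derivative (Q (x t) (v t) t + grad_pos L (x t) (v t) t)) (at t))"
      unfolding lagrange_eqs_def P_def v_def ..
    also have "\<dots> \<longleftrightarrow> (\<forall>t\<in>T. Pd t = Q (x t) (v t) t + GX (x t) (v t) t)"
    proof (rule ball_cong[OF refl])
      fix t assume t: "t \<in> T"
      show "(P has_vector_derivative (Q (x t) (v t) t + grad_pos L (x t) (v t) t)) (at t) \<longleftrightarrow>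
          Pd t = Q (x t) (v t) t + GX (x t) (v t) t"
        using Pdd[OF t] gp[OF vc[OF t]] vector_derivative_unique_at by metis
    qed
    finally show ?thesis .
  qed
  have rhs: "lagrange_eqs (Lhat c L) (Qhat c Q) xh U \<longleftrightarrow>
     (\<forall>t\<in>T. (1 / (c - v t $ 3)) *\<^sub>R (c *\<^sub>R Pd t - Hmd t *\<^sub>R axis 3 1) =
        Qhat c Q (x t) (W t) (\<xi> t) + grad_pos (Lhat c L) (x t) (W t) (\<xi> t))"
  proof -
    have "lagrange_eqs (Lhat c L) (Qhat c Q) xh U \<longleftrightarrow>
      (\<forall>t\<in>T. (Hh has_vector_derivative (Qhat c Q (xh (\<xi> t)) (vector_derivative xh (at (\<xi> t))) (\<xi> t)
          + grad_pos (Lhat c L) (xh (\<xi> t)) (vector_derivative xh (at (\<xi> t))) (\<xi> t))) (at (\<xi> t)))"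
      unfolding lagrange_eqs_def Hh_def U_def ball_simps(9) ..
    also have "\<dots> \<longleftrightarrow> (\<forall>t\<in>T. (1 / (c - v t $ 3)) *\<^sub>R (c *\<^sub>R Pd t - Hmd t *\<^sub>R axis 3 1) =
        Qhat c Q (x t) (W t) (\<xi> t) + grad_pos (Lhat c L) (x t) (W t) (\<xi> t))"
    proof (rule ball_cong[OF refl])
      fix t assume t: "t \<in> T"
      show "(Hh has_vector_derivative (Qhat c Q (xh (\<xi> t)) (vector_derivative xh (at (\<xi> t))) (\<xi> t)
          + grad_pos (Lhat c L) (xh (\<xi> t)) (vector_derivative xh (at (\<xi> t))) (\<xi> t))) (at (\<xi> t)) \<longleftrightarrow>
        (1 / (c - v t $ 3)) *\<^sub>R (c *\<^sub>R Pd t - Hmd t *\<^sub>R axis 3 1) =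
        Qhat c Q (x t) (W t) (\<xi> t) + grad_pos (Lhat c L) (x t) (W t) (\<xi> t)"
        unfolding xh\<xi>[OF t] xhv[OF t] using Hhd[OF t] vector_derivative_unique_at by metis
    qed
    finally show ?thesis .
  qed
  have pt: "Pd t = Q (x t) (v t) t + GX (x t) (v t) t \<longleftrightarrow>
     (1 / (c - v t $ 3)) *\<^sub>R (c *\<^sub>R Pd t - Hmd t *\<^sub>R axis 3 1) =
        Qhat c Q (x t) (W t) (\<xi> t) + grad_pos (Lhat c L) (x t) (W t) (\<xi> t)" if t: "t \<in> T" for t
  proof -
    have D: "((\<lambda>(x,v,t). L x v t) has_derivative DL (x t) (v t) t) (at (x t, v t, t))"
      using LD[OF vc[OF t]] .
    have q: "Qhat c Q (x t) (W t) (\<xi> t) = (let F = Q (x t) (v t) t in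
        (\<chi> i. if i = 3 then F $ 3 - (W t $ 1 * F $ 1 + W t $ 2 * F $ 2) else (1 + W t $ 3) * F $ i))"
      unfolding Qhat_def Wv[OF t] \<xi>t[OF t] ..
    have g: "grad_pos (Lhat c L) (x t) (W t) (\<xi> t) = (\<chi> j. (1 + W t $ 3) * (GX (x t) (v t) t $ j
        + (if j = 3 then DL (x t) (v t) t (0,0,1) / c else 0)))"
      using Lhat_grad_pos[OF D Wv[OF t, symmetric] \<xi>t[OF t, symmetric]] c by (simp add: GX_def)
    have h: "Hmd t = v t \<bullet> Pd t - v t \<bullet> GX (x t) (v t) t - DL (x t) (v t) t (0,0,1)"
      unfolding Hmd_def dec[OF vc[OF t], where hx="v t" and hv="a t" and ht=1] P_def gv[OF vc[OF t]] by simp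
    show ?thesis unfolding q g h unfolding Let_def W_def
      by (rule final_alg[OF v3[OF t] c])
  qed
  have "lagrange_eqs L Q x T \<longleftrightarrow> lagrange_eqs (Lhat c L) (Qhat c Q) xh U"
    unfolding lhs rhs by (rule ball_cong[OF refl]) (rule pt)
  then show ?thesis by (simp add: L_def U_def \<xi>_def)
qed

end
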